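(* The run-length encoding of $(a(n))_{n\ge 0}$ is the sequence $1,\,2-\mathbf f[0],\,2-\mathbf f[1],\,2-\mathbf f[2],\,\ldots$ (OEIS A001468).
   Context: Let $(F_n)_{n\ge 0}$ be the Fibonacci numbers: $F_0=0$, $F_1=1$, $F_n=F_{n-1}+F_{n-2}$ for $n\ge 2$. Define $(a(n))_{n\ge 0}$ (OEIS A105774) by $a(0)=0$, $a(1)=1$, and for $n\ge 2$, $a(n)=F_{j+1}-a(n-F_j)$, where $j\ge 2$ is the unique index with $F_j<n\le F_{j+1}$. The run-length encoding of a sequence is the sequence of lengths of its successive maximal blocks of consecutive equal terms. $\mathbf f=\mathbf f[0]\mathbf f[1]\mathbf f[2]\cdots=01001010\cdots$ is the infinite Fibonacci word, the fixed point of the morphism $0\mapsto 01$, $1\mapsto 0$. *)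

theory Defs
  imports "HOL-Number_Theory.Fib"
begin

definition fib_idx :: "nat \<Rightarrow> nat" where
  "fib_idx n = (THE j. 2 \<le> j \<and> fib j < n \<and> n \<le> fib (Suc j))"

lemma fib_Suc_ge: "k \<le> fib (Suc k)"
proof (induction k rule: nat_less_induct)
  case (1 k)
  show ?case
  proof (cases k)
    case 0 then show ?thesis by simp
  next
    case (Suc m)
    then show ?thesis using 1 fib_neq_0_nat[of m]
      by (cases m) (auto simp: Suc)
  qed
qed

lemma fib_idx_ex1:
  assumes "2 \<le> n"
  shows "\<exists>!j. 2 \<le> j \<and> fib j < n \<and> n \<le> fib (Suc j)"
proof -
  let ?P = "\<lambda>j. n \<le> fib (Suc j)"
  have ex: "?P n" using fib_Suc_ge[of n] by simp
  define j where "j = (LEAST j. ?P j)"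
  have Pj: "?P j" unfolding j_def using LeastI[of ?P n] ex by simp
  have j2: "2 \<le> j"
  proof (rule ccontr)
    assume "\<not> 2 \<le> j"
    then have "j = 0 \<or> j = 1" by auto
    then show False using Pj assms by (auto simp: numeral_2_eq_2)
  qed
  have lt: "fib j < n"
  proof -
    have "\<not> ?P (j - 1)" unfolding j_def
      using j2 not_less_Least[of "j - 1" ?P] j_def by auto
    then show ?thesis using j2 by (simp add: Suc_diff_1)
  qed
  show ?thesis
  proof (rule ex1I[of _ j])
    show "2 \<le> j \<and> fib j < n \<and> n \<le> fib (Suc j)" using j2 lt Pj by simp
  next
    fix i assume i: "2 \<le> i \<and> fib i < n \<and> n \<le> fib (Suc i)"
    show "i = j"
    proof (rule ccontr)
      assume "i \<noteq> j"
      then have "Suc i \<le> j \<or> Suc j \<le> i" by auto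
      then show False
        using fib_mono[of "Suc i" j] fib_mono[of "Suc j" i] i lt Pj by auto
    qed
  qed
qed

lemma fib_idx_prop:
  assumes "2 \<le> n"
  shows "2 \<le> fib_idx n \<and> fib (fib_idx n) < n \<and> n \<le> fib (Suc (fib_idx n))"
  unfolding fib_idx_def using theI'[OF fib_idx_ex1[OF assms]] .

text \<open>OEIS A105774, valued in int so that no truncated subtraction occurs.\<close>
function a105774 :: "nat \<Rightarrow> int" where
  "a105774 n = (if n = 0 then 0 else if n = 1 then 1
     else int (fib (Suc (fib_idx n))) - a105774 (n - fib (fib_idx n)))"
  by auto
termination
proof (relation "measure id")
  show "wf (measure id)" by simp
next
  fix n :: nat assume "\<not> n = 0" "\<not> n = 1"
  then have "2 \<le> n" by auto
  from fib_idx_prop[OF this] have "0 < fib (fib_idx n)" using fib_neq_0_nat by auto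
  then show "(n - fib (fib_idx n), n) \<in> measure id" using \<open>\<not> n = 0\<close> by simp
qed

text \<open>The Fibonacci morphism 0 \<mapsto> 01, 1 \<mapsto> 0, and the infinite Fibonacci word
  as its fixed point: f[i] is the i-th letter of phi^(i+1)(0), a prefix of the fixed point
  of length F_(i+3) > i.\<close>
definition fib_morph :: "nat list \<Rightarrow> nat list" where
  "fib_morph w = concat (map (\<lambda>c. if c = 0 then [0, 1] else [0]) w)"

definition fibword :: "nat \<Rightarrow> nat" where
  "fibword i = ((fib_morph ^^ Suc i) [0]) ! i"

text \<open>r is the run-length encoding of the infinite sequence x: x splits into consecutive
  nonempty blocks [s k, s (k+1)) of lengths r k, each constant, adjacent blocks
  having different values (so the blocks are maximal).\<close>
definition is_run_length_encoding :: "(nat \<Rightarrow> 'a) \<Rightarrow> (nat \<Rightarrow> nat) \<Rightarrow> bool" where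
  "is_run_length_encoding x r \<longleftrightarrow>
     (\<forall>k. 0 < r k) \<and>
     (\<forall>k i. (\<Sum>m<k. r m) \<le> i \<and> i < (\<Sum>m<Suc k. r m) \<longrightarrow> x i = x (\<Sum>m<k. r m)) \<and>
     (\<forall>k. x (\<Sum>m<Suc k. r m) \<noteq> x (\<Sum>m<k. r m))"

end

theory Submission
  imports Defs
begin

inductive rl :: "'a list \<Rightarrow> nat list \<Rightarrow> bool" where
  rl_nil: "rl [] []"
| rl_cons: "0 < l \<Longrightarrow> rl xs rs \<Longrightarrow> (xs = [] \<or> hd xs \<noteq> v) \<Longrightarrow> rl (replicate l v @ xs) (l # rs)"

lemma rl_append:
  assumes "rl xs rs" "rl ys qs" "xs \<noteq> [] \<Longrightarrow> ys \<noteq> [] \<Longrightarrow> last xs \<noteq> hd ys"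
  shows "rl (xs @ ys) (rs @ qs)"
  using assms
proof (induction rule: rl.induct)
  case rl_nil
  then show ?case by simp
next
  case (rl_cons l xs rs v)
  have "rl (xs @ ys) (rs @ qs)"
    using rl_cons by (cases "xs = []") auto
  moreover have "xs @ ys = [] \<or> hd (xs @ ys) \<noteq> v"
    using rl_cons by (cases "xs = []"; cases "ys = []") (auto simp: last_append)
  ultimately show ?case using rl.rl_cons[OF rl_cons(1)] by fastforce
qed

lemma rl_map:
  assumes "rl xs rs" "inj f"
  shows "rl (map f xs) rs"
  using assms
proof (induction rule: rl.induct)
  case rl_nil then show ?case by (simp add: rl.rl_nil)
next
  case (rl_cons l xs rs v)
  have "map f xs = [] \<or> hd (map f xs) \<noteq> f v"
    using rl_cons by (cases xs) (auto dest: injD)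
  then show ?case using rl.rl_cons[OF rl_cons(1) rl_cons(4)[OF rl_cons(5)]] by simp
qed

lemma rl_idx:
  assumes "rl xs rs"
  shows "sum_list rs = length xs \<and> (\<forall>k<length rs. 0 < rs!k \<and>
     (\<forall>i. sum_list (take k rs) \<le> i \<and> i < sum_list (take (Suc k) rs) \<longrightarrow> xs!i = xs!(sum_list (take k rs))) \<and>
     (Suc k < length rs \<longrightarrow> xs!(sum_list (take (Suc k) rs)) \<noteq> xs!(sum_list (take k rs))))"
  using assms
proof (induction rule: rl.induct)
  case rl_nil then show ?case by simp
next
  case (rl_cons l xs rs v)
  show ?case
  proof (intro conjI allI impI)
    show "sum_list (l # rs) = length (replicate l v @ xs)" using rl_cons by simp
  next
    fix k assume k: "k < length (l # rs)"
    show "0 < (l # rs) ! k" using rl_cons k by (cases k) auto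
  next
    fix k i assume k: "k < length (l # rs)" and
      i: "sum_list (take k (l # rs)) \<le> i \<and> i < sum_list (take (Suc k) (l # rs))"
    show "(replicate l v @ xs) ! i = (replicate l v @ xs) ! sum_list (take k (l # rs))"
    proof (cases k)
      case 0 then show ?thesis using i rl_cons(1) by (simp add: nth_append)
    next
      case (Suc k')
      have "k' < length rs" using k Suc by simp
      moreover have "sum_list (take k' rs) \<le> i - l \<and> i - l < sum_list (take (Suc k') rs)"
        using i Suc by auto
      ultimately have "xs ! (i - l) = xs ! sum_list (take k' rs)"
        using rl_cons(4) by blast
      then show ?thesis using i Suc by (simp add: nth_append)
    qed
  next
    fix k assume k: "k < length (l # rs)" and k2: "Suc k < length (l # rs)"
    show "(replicate l v @ xs) ! sum_list (take (Suc k) (l # rs)) \<noteq> (replicate l v @ xs) ! sum_list (take k (l # rs))"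
    proof (cases k)
      case 0
      have "rs \<noteq> []" using k2 0 by simp
      then obtain r rs' where "rs = r # rs'" by (cases rs) auto
      then have "sum_list rs > 0" using rl_cons(4) by fastforce
      then have "xs \<noteq> []" using rl_cons(4) by auto
      then have "hd xs \<noteq> v" using rl_cons(3) by simp
      then show ?thesis using 0 \<open>xs \<noteq> []\<close> rl_cons(1) by (simp add: nth_append hd_conv_nth)
    next
      case (Suc k')
      have "xs ! sum_list (take (Suc k') rs) \<noteq> xs ! sum_list (take k' rs)"
      proof -
        have "k' < length rs" "Suc k' < length rs" using k2 Suc by auto
        then show ?thesis using rl_cons(4) by blast
      qed
      then show ?thesis using Suc by (simp add: nth_append)
    qed
  qed
qed

lemma sum_take_map_upt: "k \<le> L \<Longrightarrow> sum_list (take k (map r [0..<L])) = (\<Sum>m<k. r m)"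
  by (simp add: take_map interv_sum_list_conv_sum_set_nat atLeast0LessThan)

lemma bridge:
  assumes H: "\<And>K. \<exists>L N. K < L \<and> rl (map x [0..<N]) (map r [0..<L])"
  shows "is_run_length_encoding x r"
  unfolding is_run_length_encoding_def
proof (intro conjI allI impI)
  fix k
  obtain L N where L: "Suc (Suc k) < L" and R: "rl (map x [0..<N]) (map r [0..<L])" using H by blast
  note I = rl_idx[OF R]
  have s: "\<And>j. j \<le> L \<Longrightarrow> sum_list (take j (map r [0..<L])) = (\<Sum>m<j. r m)"
    by (rule sum_take_map_upt)
  have tot: "(\<Sum>m<L. r m) = N" using I s[of L] by simp
  have mono: "\<And>j. j \<le> L \<Longrightarrow> (\<Sum>m<j. r m) \<le> N"
    using tot by (metis lessThan_subset_iff finite_lessThan sum_mono2 zero_le)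
  have kL: "k < length (map r [0..<L])" "Suc k < length (map r [0..<L])" using L by auto
  have sk: "sum_list (take k (map r [0..<L])) = (\<Sum>m<k. r m)" using s L by simp
  have sk1: "sum_list (take (Suc k) (map r [0..<L])) = (\<Sum>m<Suc k. r m)" using s L by simp
  have pk: "0 < r k" using I kL by auto
  then show "0 < r k" .
  {
    fix i assume i: "(\<Sum>m<k. r m) \<le> i \<and> i < (\<Sum>m<Suc k. r m)"
    have "i < N" using i mono[of "Suc k"] L by auto
    moreover have "(\<Sum>m<k. r m) < N" using i mono[of "Suc k"] L by auto
    moreover have "map x [0..<N] ! i = map x [0..<N] ! (\<Sum>m<k. r m)"
    proof -
      have "\<forall>i. sum_list (take k (map r [0..<L])) \<le> i \<and> i < sum_list (take (Suc k) (map r [0..<L]))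
         \<longrightarrow> map x [0..<N] ! i = map x [0..<N] ! sum_list (take k (map r [0..<L]))"
        using I kL(1) by blast
      then show ?thesis using i unfolding sk sk1 by blast
    qed
    ultimately show "x i = x (\<Sum>m<k. r m)" by simp
  }
  have p2: "0 < r (Suc k)" using I kL by auto
  have "(\<Sum>m<Suc (Suc k). r m) \<le> N" using mono[of "Suc (Suc k)"] L by linarith
  then have lt: "(\<Sum>m<Suc k. r m) < N" using p2 by simp
  moreover have "(\<Sum>m<k. r m) < N" using lt pk by simp
  moreover have "map x [0..<N] ! (\<Sum>m<Suc k. r m) \<noteq> map x [0..<N] ! (\<Sum>m<k. r m)"
  proof -
    have "map x [0..<N] ! sum_list (take (Suc k) (map r [0..<L])) \<noteq> map x [0..<N] ! sum_list (take k (map r [0..<L]))"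
      using I kL by blast
    then show ?thesis unfolding sk sk1 by blast
  qed
  ultimately show "x (\<Sum>m<Suc k. r m) \<noteq> x (\<Sum>m<k. r m)" by simp
qed

definition fw :: "nat \<Rightarrow> nat list" where "fw n = (fib_morph ^^ n) [0]"

lemma fib_morph_append: "fib_morph (xs @ ys) = fib_morph xs @ fib_morph ys"
  by (simp add: fib_morph_def)

lemma funpow_morph_append: "(fib_morph ^^ n) (xs @ ys) = (fib_morph ^^ n) xs @ (fib_morph ^^ n) ys"
  by (induction n) (simp_all add: fib_morph_append)

lemma fw_0: "fw 0 = [0]" by (simp add: fw_def)
lemma fw_1: "fw (Suc 0) = [0,1]" by (simp add: fw_def fib_morph_def)

lemma fw_rec: "fw (Suc (Suc n)) = fw (Suc n) @ fw n"
proof -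
  have "fw (Suc (Suc n)) = (fib_morph ^^ Suc n) (fib_morph [0])"
    unfolding fw_def by (simp only: funpow_Suc_right comp_def)
  also have "fib_morph [0] = [0] @ [1]" by (simp add: fib_morph_def)
  also have "(fib_morph ^^ Suc n) ([0] @ [1]) = fw (Suc n) @ (fib_morph ^^ Suc n) [1]"
    by (simp only: funpow_morph_append fw_def)
  also have "(fib_morph ^^ Suc n) [1] = fw n"
    unfolding fw_def by (simp only: funpow_Suc_right comp_def) (simp add: fib_morph_def)
  finally show ?thesis .
qed

lemma fw_len: "length (fw n) = fib (Suc (Suc n))"
  by (induction n rule: fib.induct) (simp_all add: fw_0 fw_1 fw_rec numeral_2_eq_2)

lemma fw_prefix_Suc: "\<exists>zs. fw (Suc n) = fw n @ zs"
  by (cases n) (auto simp: fw_0 fw_1 fw_rec)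

lemma fw_prefix: "n \<le> m \<Longrightarrow> \<exists>zs. fw m = fw n @ zs"
proof (induction m rule: dec_induct)
  case base then show ?case by simp
next
  case (step m)
  then show ?case using fw_prefix_Suc[of m] by auto
qed

lemma fw_nth: "i < length (fw n) \<Longrightarrow> fw n ! i = fibword i"
proof -
  assume i: "i < length (fw n)"
  have f: "fibword i = fw (Suc i) ! i" by (simp add: fibword_def fw_def)
  have li: "i < length (fw (Suc i))" using fw_len[of "Suc i"] fib_Suc_ge[of "Suc (Suc i)"]
    by simp
  obtain zs where z1: "fw (max n (Suc i)) = fw n @ zs" using fw_prefix[of n "max n (Suc i)"] by auto
  obtain ys where z2: "fw (max n (Suc i)) = fw (Suc i) @ ys" using fw_prefix[of "Suc i" "max n (Suc i)"] by auto
  have "fw n ! i = fw (max n (Suc i)) ! i" using z1 i by (simp add: nth_append)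
  also have "\<dots> = fw (Suc i) ! i" using z2 li by (simp add: nth_append)
  finally show ?thesis using f by simp
qed

declare a105774.simps[simp del]

lemma fib_pos: "0 < n \<Longrightarrow> 1 \<le> fib n"
  using fib_neq_0_nat[of n] by simp

lemma fib_idx_eq:
  assumes "2 \<le> j" "fib j < n" "n \<le> fib (Suc j)"
  shows "fib_idx n = j"
proof -
  have "1 \<le> fib j" using assms(1) fib_pos[of j] by simp
  then have n2: "2 \<le> n" using assms(2) by simp
  show ?thesis using fib_idx_ex1[OF n2] fib_idx_prop[OF n2] assms by blast
qed

lemma a_rec: "2 \<le> n \<Longrightarrow> a105774 n = int (fib (Suc (fib_idx n))) - a105774 (n - fib (fib_idx n))"
  by (subst a105774.simps) simp

lemma a_0: "a105774 0 = 0" by (subst a105774.simps) simp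
lemma a_1: "a105774 1 = 1" by (subst a105774.simps) simp
lemma a_1': "a105774 (Suc 0) = 1" by (subst a105774.simps) simp
declare a_0[simp] a_1[simp] a_1'[simp]

lemma a_block:
  assumes "1 \<le> m" "m \<le> fib (Suc i)"
  shows "a105774 (fib (Suc (Suc i)) + m) = int (fib (Suc (Suc (Suc i)))) - a105774 m"
proof -
  have e: "fib_idx (fib (Suc (Suc i)) + m) = Suc (Suc i)"
    by (rule fib_idx_eq) (use assms in auto)
  have "2 \<le> fib (Suc (Suc i)) + m" using assms fib_pos[of "Suc (Suc i)"] by simp
  then show ?thesis using a_rec e by simp
qed

lemma fib_idx_lt: "2 \<le> m \<Longrightarrow> m \<le> fib k \<Longrightarrow> fib_idx m < k"
  using fib_idx_prop[of m] fib_mono[of k "fib_idx m"] by (meson le_trans not_less)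

lemma a_bounds: "1 \<le> m \<Longrightarrow> 1 \<le> a105774 m \<and> (2 \<le> m \<longrightarrow> a105774 m \<le> int (fib (Suc (fib_idx m))))"
proof (induction m rule: less_induct)
  case (less m)
  show ?case
  proof (cases "m = 1")
    case True then show ?thesis by (simp add: a_1')
  next
    case False
    then have m2: "2 \<le> m" using less.prems by simp
    define j where "j = fib_idx m"
    have P: "2 \<le> j" "fib j < m" "m \<le> fib (Suc j)" using fib_idx_prop[OF m2] j_def by auto
    define m' where "m' = m - fib j"
    have fj: "1 \<le> fib j" using P(1) fib_pos[of j] by simp
    have m'1: "1 \<le> m'" "m' < m" using P fj m'_def by auto
    have IH: "1 \<le> a105774 m'" "2 \<le> m' \<longrightarrow> a105774 m' \<le> int (fib (Suc (fib_idx m')))"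
      using less.IH[OF m'1(2) m'1(1)] by auto
    have fibsuc: "fib (Suc j) = fib j + fib (j - 1)" using P(1)
      by (metis Suc_diff_1 fib.simps(3) less_le_trans numeral_2_eq_2 add.commute pos2 Suc_1)
    have m'le: "m' \<le> fib (j - 1)" using P(3) m'_def fibsuc by simp
    have up: "a105774 m' \<le> int (fib (Suc j)) - 1"
    proof (cases "m' = 1")
      case True
      have "2 \<le> fib (Suc j)" using P(2) P(3) fj by simp
      then show ?thesis using True a_1 a_1' by simp
    next
      case False
      then have "2 \<le> m'" using m'1 by simp
      then have "fib_idx m' < j - 1" using fib_idx_lt m'le by blast
      then have "Suc (fib_idx m') \<le> j - 1" by simp
      then have "fib (Suc (fib_idx m')) \<le> fib (j - 1)" by (rule fib_mono)
      moreover have "fib (j - 1) \<le> fib (Suc j) - 1" using fibsuc fj by simp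
      ultimately show ?thesis using IH \<open>2 \<le> m'\<close> fj fibsuc by linarith
    qed
    have eq: "a105774 m = int (fib (Suc j)) - a105774 m'" using a_rec[OF m2] j_def m'_def by simp
    show ?thesis using eq up IH(1) j_def by simp
  qed
qed

lemma a_le_fib: "1 \<le> m \<Longrightarrow> m \<le> fib k \<Longrightarrow> a105774 m \<le> int (fib k)"
proof (cases "m = 1")
  case True
  assume "m \<le> fib k" then show ?thesis using True a_1 a_1' by simp
next
  case False
  assume m: "1 \<le> m" "m \<le> fib k"
  then have m2: "2 \<le> m" using False by simp
  have "Suc (fib_idx m) \<le> k" using fib_idx_lt[OF m2 m(2)] by simp
  then have "fib (Suc (fib_idx m)) \<le> fib k" by (rule fib_mono)
  then show ?thesis using a_bounds[OF m(1)] m2 by linarith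
qed

definition S :: "nat \<Rightarrow> int list" where "S j = map a105774 [1..<Suc (fib (Suc j))]"

lemma S_rec: "S (Suc (Suc i)) = S (Suc i) @ map (\<lambda>v. int (fib (Suc (Suc (Suc i)))) - v) (S i)"
proof -
  have f3: "fib (Suc (Suc (Suc i))) = fib (Suc (Suc i)) + fib (Suc i)" by simp
  have "[1..<Suc (fib (Suc (Suc (Suc i))))] = [1..<Suc (fib (Suc (Suc i)))] @ [Suc (fib (Suc (Suc i)))..<Suc (fib (Suc (Suc i))) + fib (Suc i)]"
    using upt_add_eq_append[of 1 "Suc (fib (Suc (Suc i)))" "fib (Suc i)"] f3 by simp
  moreover have "map a105774 [Suc (fib (Suc (Suc i)))..<Suc (fib (Suc (Suc i))) + fib (Suc i)]
     = map (\<lambda>v. int (fib (Suc (Suc (Suc i)))) - v) (map a105774 [1..<Suc (fib (Suc i))])"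
  proof (rule nth_equalityI)
    fix k assume "k < length (map a105774 [Suc (fib (Suc (Suc i)))..<Suc (fib (Suc (Suc i))) + fib (Suc i)])"
    then have k: "k < fib (Suc i)" by (simp only: length_map length_upt)
    have "a105774 (fib (Suc (Suc i)) + (Suc k)) = int (fib (Suc (Suc (Suc i)))) - a105774 (Suc k)"
      by (rule a_block) (use k in auto)
    then show "map a105774 [Suc (fib (Suc (Suc i)))..<Suc (fib (Suc (Suc i))) + fib (Suc i)] ! k
        = map (\<lambda>v. int (fib (Suc (Suc (Suc i)))) - v) (map a105774 [1..<Suc (fib (Suc i))]) ! k"
      using k by (simp add: nth_map_upt add.commute del: upt_Suc)
  qed simp
  ultimately show ?thesis unfolding S_def by simp
qed

lemma S_last: "last (S (Suc j)) = a105774 (fib (Suc (Suc j)))"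
proof -
  have "fib (Suc (Suc j)) \<ge> 1" using fib_pos[of "Suc (Suc j)"] by simp
  then have "[1..<Suc (fib (Suc (Suc j)))] = [1..<fib (Suc (Suc j))] @ [fib (Suc (Suc j))]" by simp
  then show ?thesis unfolding S_def by simp
qed

lemma S_hd: "S j \<noteq> [] \<and> hd (S j) = 1"
proof -
  have "fib (Suc j) \<ge> 1" using fib_pos[of "Suc j"] by simp
  then have "[1..<Suc (fib (Suc j))] = 1 # [Suc 1..<Suc (fib (Suc j))]" by (intro upt_conv_Cons) simp
  then show ?thesis unfolding S_def by (simp del: upt_Suc)
qed

lemma fib3: "fib (Suc (Suc (Suc 0))) = 2" by (simp add: numeral_2_eq_2)
lemma fib4: "fib (Suc (Suc (Suc (Suc 0)))) = 3" by (simp add: numeral_3_eq_3 numeral_2_eq_2)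

lemma a_2: "a105774 2 = 1"
proof -
  have "fib_idx 2 = 2" by (rule fib_idx_eq) (auto simp: numeral_2_eq_2)
  then show ?thesis using a_rec[of 2] a_1 a_1' by (simp add: numeral_2_eq_2)
qed

lemma a_3: "a105774 3 = 2"
proof -
  have "fib_idx 3 = 3" by (rule fib_idx_eq) (auto simp: numeral_3_eq_3 numeral_2_eq_2)
  then show ?thesis using a_rec[of 3] a_1 a_1' by (simp add: numeral_3_eq_3 numeral_2_eq_2)
qed

lemma main_rl: "rl (S (Suc (Suc n))) (map (\<lambda>c. 2 - c) (fw n))"
proof (induction n rule: fib.induct)
  case 1
  have "S (Suc (Suc 0)) = replicate 2 1 @ []"
    unfolding S_def fib3 by (simp add: numeral_2_eq_2 upt_rec a_1 a_1' a_2[unfolded numeral_2_eq_2])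
  then show ?case using rl_cons[of 2 "[]" "[]" 1] rl_nil by (simp add: fw_0)
next
  case 2
  have "S (Suc (Suc (Suc 0))) = replicate 2 1 @ ([2] @ [])"
    unfolding S_def fib4 by (simp add: numeral_3_eq_3 numeral_2_eq_2 upt_rec a_1
      a_2[unfolded numeral_2_eq_2] a_3[unfolded numeral_3_eq_3 numeral_2_eq_2])
  moreover have "rl ([2::int] @ []) [1]" using rl_cons[of 1 "[]" "[]" 2] rl_nil by simp
  ultimately show ?case using rl_cons[of 2 "[2::int] @ []" "[1]" "1::int"] by (simp add: fw_1)
next
  case (3 n)
  have m: "rl (map (\<lambda>v. int (fib (Suc (Suc (Suc (Suc (Suc n)))))) - v) (S (Suc (Suc n)))) (map (\<lambda>c. 2 - c) (fw n))"
    by (rule rl_map[OF 3(2)]) (auto intro: injI)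
  have l: "last (S (Suc (Suc (Suc n)))) = a105774 (fib (Suc (Suc (Suc (Suc n)))))" by (rule S_last)
  have le: "a105774 (fib (Suc (Suc (Suc (Suc n))))) \<le> int (fib (Suc (Suc (Suc (Suc n)))))"
    by (rule a_le_fib) (use fib_pos[of "Suc (Suc (Suc (Suc n)))"] in auto)
  have f2: "fib (Suc (Suc (Suc n))) \<ge> 2"
  proof -
    have "fib (Suc (Suc (Suc 0))) \<le> fib (Suc (Suc (Suc n)))" by (rule fib_mono) simp
    then show ?thesis using fib3 by simp
  qed
  have ne: "last (S (Suc (Suc (Suc n)))) \<noteq> hd (map (\<lambda>v. int (fib (Suc (Suc (Suc (Suc (Suc n)))))) - v) (S (Suc (Suc n))))"
    using l le f2 S_hd[of "Suc (Suc n)"] by (simp add: hd_map)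
  have "rl (S (Suc (Suc (Suc n))) @ map (\<lambda>v. int (fib (Suc (Suc (Suc (Suc (Suc n)))))) - v) (S (Suc (Suc n))))
     (map (\<lambda>c. 2 - c) (fw (Suc n)) @ map (\<lambda>c. 2 - c) (fw n))"
    using rl_append[OF 3(1) m] ne by blast
  then show ?case using S_rec[of "Suc (Suc n)"] fw_rec[of n] by simp
qed

theorem theorem19:
  shows "is_run_length_encoding a105774
           (\<lambda>k. if k = 0 then 1 else 2 - fibword (k - 1))"
proof (rule bridge)
  fix K :: nat
  let ?r = "(\<lambda>k. if k = 0 then 1 else 2 - fibword (k - 1))"
  define n where "n = K"
  have R: "rl (a105774 0 # S (Suc (Suc n))) (1 # map (\<lambda>c. 2 - c) (fw n))"
    using rl_append[OF rl_cons[of 1 "[]" "[]" "a105774 0"] main_rl[of n]] rl_nil S_hd a_0 by simp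
  have e1: "a105774 0 # S (Suc (Suc n)) = map a105774 [0..<Suc (fib (Suc (Suc (Suc n))))]"
    unfolding S_def by (simp add: upt_conv_Cons del: upt_Suc)
  have e2: "1 # map (\<lambda>c. 2 - c) (fw n) = map ?r [0..<Suc (fib (Suc (Suc n)))]"
  proof (rule nth_equalityI)
    show "length (1 # map (\<lambda>c. 2 - c) (fw n)) = length (map ?r [0..<Suc (fib (Suc (Suc n)))])"
      by (simp add: fw_len)
  next
    fix k assume "k < length (1 # map (\<lambda>c. 2 - c) (fw n))"
    then have k: "k < Suc (fib (Suc (Suc n)))" by (simp add: fw_len)
    show "(1 # map (\<lambda>c. 2 - c) (fw n)) ! k = map ?r [0..<Suc (fib (Suc (Suc n)))] ! k"
    proof (cases k)
      case 0 then show ?thesis by (simp del: upt_Suc)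
    next
      case (Suc k')
      then have "k' < length (fw n)" using k by (simp add: fw_len)
      then show ?thesis using Suc k fw_nth[of k' n] by (simp del: upt_Suc)
    qed
  qed
  have "K < Suc (fib (Suc (Suc n)))" using fib_Suc_ge[of "Suc n"] fib_mono[of "Suc n" "Suc (Suc n)"] n_def by simp
  then show "\<exists>L N. K < L \<and> rl (map a105774 [0..<N]) (map ?r [0..<L])"
    using R e1 e2 by metis
qed

end
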